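(* Consider matrices $F_k,C_k\in\mathbb R^{m\times n}$, $H_k\in\mathbb R^{p\times n}$, positive definite symmetric $S_k\in\mathbb R^{m\times m}$, $R_k\in\mathbb R^{p\times p}$, and observations $y_k\in\mathbb R^p$, $k=0,1,2,\dots$, for the descriptor system $F_{k+1}x_{k+1}-C_kx_k=f_{k+1}$, $F_0x_0=f_0$, $y_k=H_kx_k+g_k$ with uncertainty set (for each horizon $\tau$) $\langle S_0f_0,f_0\rangle+\sum_{i=1}^{\tau}\langle S_{i-1}f_i,f_i\rangle+\sum_{i=0}^{\tau}\langle R_ig_i,g_i\rangle\le1$. Let $P_k,r_k,B_k$ be defined by $P_0=F_0'S_0F_0+H_0'R_0H_0$, $r_0=H_0'R_0y_0$, $B_k=P_k+C_k'S_kC_k$, and for $k\ge1$ $P_k=H_k'R_kH_k+F_k'[S_{k-1}-S_{k-1}C_{k-1}B_{k-1}^+C_{k-1}'S_{k-1}]F_k$, $r_k=F_k'S_{k-1}C_{k-1}B_{k-1}^+r_{k-1}+H_k'R_ky_k$. Let $\hat x_{k|k}$, $P_{k|k}$, $A_k$ be defined by $P_{0|0}^{-1}=F_0'S_0F_0+H_0'R_0H_0$, $\hat x_{0|0}=P_{0|0}H_0'R_0y_0$, $A_k^{-1}=S_k^{-1}+C_kP_{k|k}C_k'$, and for $k\ge1$ $P_{k|k}^{-1}=F_k'A_{k-1}F_k+H_k'R_kH_k$, $\hat x_{k|k}=P_{k|k}F_k'A_{k-1}C_{k-1}\hat x_{k-1|k-1}+P_{k|k}H_k'R_ky_k$. If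 $\mathrm{rank}\begin{bmatrix}F_k\\H_k\end{bmatrix}=n$ for all $k$, then for all $k$ the index of non-causality satisfies $I_k=0$ and $P_k^+r_k=\hat x_{k|k}$.
   Context: $A'$ denotes transpose and $A^+$ the Moore–Penrose pseudoinverse. For horizon $k$, let $X(k)$ be the set of states $x_k$ for which there exist $x_0,\dots,x_{k-1}$ such that the residuals $f_0=F_0x_0$, $f_{j+1}=F_{j+1}x_{j+1}-C_jx_j$, $g_j=y_j-H_jx_j$ ($j\le k$) satisfy the uncertainty constraint with $\tau=k$. The $\ell$-error is $\hat\rho(\ell,k):=\inf_{z\in X(k)}\sup_{x\in X(k)}|\langle\ell,x-z\rangle|$, the minimax observable subspace is $\mathcal L(k):=\{\ell\in\mathbb R^n:\hat\rho(\ell,k)<\infty\}$, and the index of non-causality is $I_k:=n-\dim\mathcal L(k)$. The observations $y_k$ are assumed generated by some trajectory whose inputs and noises satisfy the uncertainty constraint. *)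

theory Defs
  imports "HOL-Analysis.Analysis"
begin

definition is_pinv :: "real^'n^'m \<Rightarrow> real^'m^'n \<Rightarrow> bool" where
  "is_pinv A X \<longleftrightarrow> A ** X ** A = A \<and> X ** A ** X = X \<and>
     transpose (A ** X) = A ** X \<and> transpose (X ** A) = X ** A"

definition pinv :: "real^'n^'m \<Rightarrow> real^'m^'n" where
  "pinv A = (THE X. is_pinv A X)"

definition sym_posdef :: "real^'m^'m \<Rightarrow> bool" where
  "sym_posdef S \<longleftrightarrow> transpose S = S \<and> (\<forall>x. x \<noteq> 0 \<longrightarrow> x \<bullet> (S *v x) > 0)"

definition stack :: "real^'n^'m \<Rightarrow> real^'n^'p \<Rightarrow> real^'n^('m + 'p)" where
  "stack F H = (\<chi> i. case i of Inl a \<Rightarrow> F $ a | Inr b \<Rightarrow> H $ b)"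

definition unc :: "(nat \<Rightarrow> real^'n^'m) \<Rightarrow> (nat \<Rightarrow> real^'n^'m) \<Rightarrow> (nat \<Rightarrow> real^'n^'p)
   \<Rightarrow> (nat \<Rightarrow> real^'m^'m) \<Rightarrow> (nat \<Rightarrow> real^'p^'p) \<Rightarrow> (nat \<Rightarrow> real^'p)
   \<Rightarrow> (nat \<Rightarrow> real^'n) \<Rightarrow> nat \<Rightarrow> real" where
  "unc F C H S R y xs \<tau> =
     (let f0 = F 0 *v xs 0;
          f = (\<lambda>j. F j *v xs j - C (j - 1) *v xs (j - 1));
          g = (\<lambda>j. y j - H j *v xs j)
      in (S 0 *v f0) \<bullet> f0 + (\<Sum>i=1..\<tau>. (S (i - 1) *v f i) \<bullet> f i)
         + (\<Sum>i=0..\<tau>. (R i *v g i) \<bullet> g i))"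

definition Xset :: "(nat \<Rightarrow> real^'n^'m) \<Rightarrow> (nat \<Rightarrow> real^'n^'m) \<Rightarrow> (nat \<Rightarrow> real^'n^'p)
   \<Rightarrow> (nat \<Rightarrow> real^'m^'m) \<Rightarrow> (nat \<Rightarrow> real^'p^'p) \<Rightarrow> (nat \<Rightarrow> real^'p)
   \<Rightarrow> nat \<Rightarrow> (real^'n) set" where
  "Xset F C H S R y k = {xs k | xs. unc F C H S R y xs k \<le> 1}"

definition rho_hat :: "(nat \<Rightarrow> real^'n^'m) \<Rightarrow> (nat \<Rightarrow> real^'n^'m) \<Rightarrow> (nat \<Rightarrow> real^'n^'p)
   \<Rightarrow> (nat \<Rightarrow> real^'m^'m) \<Rightarrow> (nat \<Rightarrow> real^'p^'p) \<Rightarrow> (nat \<Rightarrow> real^'p)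
   \<Rightarrow> real^'n \<Rightarrow> nat \<Rightarrow> ereal" where
  "rho_hat F C H S R y l k =
     (INF z\<in>Xset F C H S R y k. SUP x\<in>Xset F C H S R y k. ereal \<bar>l \<bullet> (x - z)\<bar>)"

definition Lsub :: "(nat \<Rightarrow> real^'n^'m) \<Rightarrow> (nat \<Rightarrow> real^'n^'m) \<Rightarrow> (nat \<Rightarrow> real^'n^'p)
   \<Rightarrow> (nat \<Rightarrow> real^'m^'m) \<Rightarrow> (nat \<Rightarrow> real^'p^'p) \<Rightarrow> (nat \<Rightarrow> real^'p)
   \<Rightarrow> nat \<Rightarrow> (real^'n) set" where
  "Lsub F C H S R y k = {l. rho_hat F C H S R y l k < \<infinity>}"

definition noncaus_index :: "(nat \<Rightarrow> real^'n^'m) \<Rightarrow> (nat \<Rightarrow> real^'n^'m) \<Rightarrow> (nat \<Rightarrow> real^'n^'p)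
   \<Rightarrow> (nat \<Rightarrow> real^'m^'m) \<Rightarrow> (nat \<Rightarrow> real^'p^'p) \<Rightarrow> (nat \<Rightarrow> real^'p)
   \<Rightarrow> nat \<Rightarrow> nat" where
  "noncaus_index F C H S R y k = CARD('n) - dim (Lsub F C H S R y k)"

fun Pr :: "(nat \<Rightarrow> real^'n^'m) \<Rightarrow> (nat \<Rightarrow> real^'n^'m) \<Rightarrow> (nat \<Rightarrow> real^'n^'p)
   \<Rightarrow> (nat \<Rightarrow> real^'m^'m) \<Rightarrow> (nat \<Rightarrow> real^'p^'p) \<Rightarrow> (nat \<Rightarrow> real^'p)
   \<Rightarrow> nat \<Rightarrow> (real^'n^'n) \<times> (real^'n)" where
  "Pr F C H S R y 0 =
     (transpose (F 0) ** S 0 ** F 0 + transpose (H 0) ** R 0 ** H 0,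
      transpose (H 0) ** R 0 *v y 0)"
| "Pr F C H S R y (Suc k) =
     (let P = fst (Pr F C H S R y k); r = snd (Pr F C H S R y k);
          B = P + transpose (C k) ** S k ** C k
      in (transpose (H (Suc k)) ** R (Suc k) ** H (Suc k)
            + transpose (F (Suc k)) ** (S k - S k ** C k ** pinv B ** transpose (C k) ** S k) ** F (Suc k),
          transpose (F (Suc k)) ** S k ** C k ** pinv B *v r
            + transpose (H (Suc k)) ** R (Suc k) *v y (Suc k)))"

definition Amat :: "real^'m^'m \<Rightarrow> real^'n^'m \<Rightarrow> real^'n^'n \<Rightarrow> real^'m^'m" where
  "Amat Sk Ck Pkk = matrix_inv (matrix_inv Sk + Ck ** Pkk ** transpose Ck)"

fun Kf :: "(nat \<Rightarrow> real^'n^'m) \<Rightarrow> (nat \<Rightarrow> real^'n^'m) \<Rightarrow> (nat \<Rightarrow> real^'n^'p)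
   \<Rightarrow> (nat \<Rightarrow> real^'m^'m) \<Rightarrow> (nat \<Rightarrow> real^'p^'p) \<Rightarrow> (nat \<Rightarrow> real^'p)
   \<Rightarrow> nat \<Rightarrow> (real^'n^'n) \<times> (real^'n)" where
  "Kf F C H S R y 0 =
     (let P00 = matrix_inv (transpose (F 0) ** S 0 ** F 0 + transpose (H 0) ** R 0 ** H 0)
      in (P00, P00 ** transpose (H 0) ** R 0 *v y 0))"
| "Kf F C H S R y (Suc k) =
     (let Pp = fst (Kf F C H S R y k); xp = snd (Kf F C H S R y k);
          A = Amat (S k) (C k) Pp;
          Pn = matrix_inv (transpose (F (Suc k)) ** A ** F (Suc k)
                 + transpose (H (Suc k)) ** R (Suc k) ** H (Suc k))
      in (Pn, Pn ** transpose (F (Suc k)) ** A ** C k *v xp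
              + Pn ** transpose (H (Suc k)) ** R (Suc k) *v y (Suc k)))"

end

theory Submission
  imports Defs
begin

lemma madd_r: "((A::real^'n^'m) + B) ** (C::real^'p^'n) = A ** C + B ** C"
  by (vector matrix_matrix_mult_def sum.distrib[symmetric] field_simps)
lemma msub_l: "(A::real^'n^'m) ** ((B::real^'p^'n) - C) = A ** B - A ** C"
  by (vector matrix_matrix_mult_def sum_subtractf[symmetric] field_simps)
lemma msub_r: "((A::real^'n^'m) - B) ** (C::real^'p^'n) = A ** C - B ** C"
  by (vector matrix_matrix_mult_def sum_subtractf[symmetric] field_simps)
lemma transpose_add: "transpose ((A::real^'n^'m) + B) = transpose A + transpose B"
  by (simp add: transpose_def vec_eq_iff)

lemma minv: assumes "invertible (A::real^'n^'n)"
  shows "A ** matrix_inv A = mat 1" "matrix_inv A ** A = mat 1"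
  using someI_ex[OF assms[unfolded invertible_def]] unfolding matrix_inv_def by auto

lemma minv_unique: assumes "(A::real^'n^'n) ** X = mat 1" shows "matrix_inv A = X"
proof -
  have X: "X ** A = mat 1" using assms matrix_left_right_inverse by blast
  have inv: "invertible A" using assms X invertible_def by blast
  have "matrix_inv A = matrix_inv A ** (A ** X)" using assms by simp
  also have "\<dots> = X" by (simp add: matrix_mul_assoc minv(2)[OF inv])
  finally show ?thesis .
qed

lemma minv_unique': assumes "X ** (A::real^'n^'n) = mat 1" shows "matrix_inv A = X"
  using assms matrix_left_right_inverse minv_unique by blast

lemma minv_cancel: assumes "invertible (A::real^'n^'n)"
  shows "A ** (matrix_inv A ** Z) = Z" "matrix_inv A ** (A ** Z) = Z"
  by (simp_all add: matrix_mul_assoc minv[OF assms])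

lemma dot_transpose: "(x::real^'n) \<bullet> (transpose F *v w) = (F *v x) \<bullet> w"
proof -
  have "(w v* F) \<bullet> x = w \<bullet> (F *v x)" by (rule dot_lmul_matrix)
  thus ?thesis by (simp add: inner_commute)
qed

lemma pd_pos: "sym_posdef S \<Longrightarrow> x \<noteq> 0 \<Longrightarrow> 0 < x \<bullet> (S *v x)"
  by (simp add: sym_posdef_def)

lemma pd_sym: "sym_posdef S \<Longrightarrow> transpose S = S"
  by (simp add: sym_posdef_def)

lemma pd_inj: "sym_posdef S \<Longrightarrow> S *v x = 0 \<Longrightarrow> x = 0"
  by (metis pd_pos inner_zero_right less_irrefl)

lemma pd_invertible: "sym_posdef (S::real^'n^'n) \<Longrightarrow> invertible S"
  by (meson invertible_left_inverse matrix_left_invertible_ker pd_inj)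

lemma pd_psd: "sym_posdef S \<Longrightarrow> 0 \<le> x \<bullet> (S *v x)"
  unfolding sym_posdef_def by (cases "x = 0") (auto intro: less_imp_le)

lemma pd_inv: assumes "sym_posdef (S::real^'n^'n)" shows "sym_posdef (matrix_inv S)"
proof -
  have inv: "invertible S" using pd_invertible assms by blast
  have tS: "transpose S = S" using pd_sym[OF assms] .
  have "transpose (matrix_inv S) ** S = mat 1"
    by (metis matrix_transpose_mul minv(1)[OF inv] tS transpose_mat)
  then have t: "transpose (matrix_inv S) = matrix_inv S" using minv_unique' by metis
  show ?thesis unfolding sym_posdef_def
  proof (intro conjI t allI impI)
    fix x :: "real^'n" assume x: "x \<noteq> 0"
    define v where "v = matrix_inv S *v x"
    have xv: "x = S *v v" by (simp add: v_def matrix_vector_mul_assoc minv(1)[OF inv])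
    have "v \<noteq> 0" using x xv by auto
    then have "0 < v \<bullet> (S *v v)" using pd_pos[OF assms] by blast
    moreover have "x \<bullet> (matrix_inv S *v x) = (S *v v) \<bullet> v"
      by (simp only: v_def[symmetric]) (simp only: xv)
    ultimately show "0 < x \<bullet> (matrix_inv S *v x)" by (simp only: inner_commute)
  qed
qed

lemma congr_quad: fixes F :: "real^'n^'m" shows "x \<bullet> ((transpose F ** A ** F) *v x) = (F *v x) \<bullet> (A *v (F *v x))"
  by (simp only: matrix_vector_mul_assoc[symmetric]) (rule dot_transpose)

lemma congr_sym: fixes F :: "real^'n^'m" assumes "transpose A = A" shows "transpose (transpose F ** A ** F) = transpose F ** A ** F"
proof -
  have "transpose (transpose F ** A ** F) = transpose F ** (transpose A ** F)"
    by (simp only: matrix_transpose_mul transpose_transpose)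
  thus ?thesis using assms by (simp add: matrix_mul_assoc)
qed

lemma pd_add_congr: fixes P :: "real^'n^'n" and Q :: "real^'m^'m" and C :: "real^'n^'m"
  assumes "sym_posdef P" "sym_posdef Q"
  shows "sym_posdef (P + transpose C ** Q ** C)"
  unfolding sym_posdef_def
proof (intro conjI allI impI)
  show "transpose (P + transpose C ** Q ** C) = P + transpose C ** Q ** C"
    using pd_sym[OF assms(1)] pd_sym[OF assms(2)] by (simp add: transpose_add congr_sym)
  fix x :: "real^'n" assume "x \<noteq> 0"
  then have "0 < x \<bullet> (P *v x)" using pd_pos[OF assms(1)] by blast
  moreover have "0 \<le> x \<bullet> ((transpose C ** Q ** C) *v x)"
    by (simp only: congr_quad pd_psd[OF assms(2)])
  ultimately show "0 < x \<bullet> ((P + transpose C ** Q ** C) *v x)"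
    by (simp add: matrix_vector_mult_add_rdistrib inner_add_right)
qed

lemma stack_mult: "stack F H *v x = (\<chi> i. case i of Inl a \<Rightarrow> (F *v x)$a | Inr b \<Rightarrow> (H *v x)$b)"
  by (simp add: vec_eq_iff stack_def matrix_vector_mult_def split: sum.split)

lemma stack_inj: assumes "rank (stack F H) = CARD('n)" "F *v x = 0" "H *v (x::real^'n) = 0"
  shows "x = 0"
proof -
  have "stack F H *v x = stack F H *v 0" using assms(2,3)
    by (simp add: stack_mult vec_eq_iff split: sum.split)
  then show ?thesis using assms(1) full_rank_injective by (metis injD)
qed

lemma pd_FH: assumes "sym_posdef A" "sym_posdef R" "rank (stack F H) = CARD('n)"
  shows "sym_posdef (transpose F ** A ** F + transpose H ** R ** (H::real^'n^'p))"
  unfolding sym_posdef_def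
proof (intro conjI allI impI)
  show "transpose (transpose F ** A ** F + transpose H ** R ** H) = transpose F ** A ** F + transpose H ** R ** H"
    using pd_sym[OF assms(1)] pd_sym[OF assms(2)] by (simp add: transpose_add congr_sym)
  fix x :: "real^'n" assume x: "x \<noteq> 0"
  have a: "0 \<le> (F *v x) \<bullet> (A *v (F *v x))" "0 \<le> (H *v x) \<bullet> (R *v (H *v x))"
    using pd_psd assms by auto
  have "F *v x \<noteq> 0 \<or> H *v x \<noteq> 0" using stack_inj[OF assms(3)] x by blast
  then have "0 < (F *v x) \<bullet> (A *v (F *v x)) \<or> 0 < (H *v x) \<bullet> (R *v (H *v x))"
    using pd_pos[OF assms(1)] pd_pos[OF assms(2)] by blast
  moreover have "x \<bullet> ((transpose F ** A ** F + transpose H ** R ** H) *v x)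
      = (F *v x) \<bullet> (A *v (F *v x)) + (H *v x) \<bullet> (R *v (H *v x))"
    by (simp only: matrix_vector_mult_add_rdistrib inner_add_right congr_quad)
  ultimately show "0 < x \<bullet> ((transpose F ** A ** F + transpose H ** R ** H) *v x)"
    using a by (metis add_nonneg_pos add_pos_nonneg)
qed

lemma woodbury_aux:
  fixes S :: "real^'m^'m" and P B :: "real^'n^'n" and C :: "real^'n^'m"
  assumes iS: "invertible S" and iP: "invertible P" and iB: "invertible B"
    and B: "B = P + transpose C ** S ** C"
  shows "matrix_inv (matrix_inv S + C ** matrix_inv P ** transpose C)
           = S - S ** C ** matrix_inv B ** transpose C ** S"
    and "(S - S ** C ** matrix_inv B ** transpose C ** S) ** C ** matrix_inv P
           = S ** C ** matrix_inv B"
proof -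
  have CSC: "transpose C ** (S ** C) = B - P" using B by (simp add: matrix_mul_assoc)
  have h1: "matrix_inv P ** (transpose C ** (S ** (C ** (matrix_inv B ** Z)))) =
            matrix_inv P ** Z - matrix_inv B ** Z" for Z :: "real^'m^'n"
  proof -
    have "transpose C ** (S ** (C ** (matrix_inv B ** Z))) = (B - P) ** (matrix_inv B ** Z)"
      by (simp add: CSC[symmetric] matrix_mul_assoc)
    also have "\<dots> = Z - P ** (matrix_inv B ** Z)"
      by (simp add: msub_r minv_cancel[OF iB])
    finally show ?thesis by (simp add: msub_l minv_cancel[OF iP])
  qed
  have h2: "matrix_inv B ** (transpose C ** (S ** (C ** matrix_inv P))) = matrix_inv P - matrix_inv B"
  proof -
    have "matrix_inv B ** (transpose C ** (S ** (C ** matrix_inv P))) = matrix_inv B ** ((B - P) ** matrix_inv P)"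
      by (simp add: CSC[symmetric] matrix_mul_assoc)
    also have "\<dots> = matrix_inv P - matrix_inv B"
      by (simp add: msub_r msub_l minv_cancel[OF iB] minv(1)[OF iP] minv(2)[OF iB] matrix_mul_assoc)
    finally show ?thesis .
  qed
  have "(matrix_inv S + C ** matrix_inv P ** transpose C) ** (S - S ** C ** matrix_inv B ** transpose C ** S) = mat 1"
    by (simp add: matrix_mul_assoc[symmetric] matrix_add_ldistrib madd_r msub_l msub_r
        minv_cancel[OF iS] minv(2)[OF iS] h1)
  then show "matrix_inv (matrix_inv S + C ** matrix_inv P ** transpose C)
           = S - S ** C ** matrix_inv B ** transpose C ** S" by (rule minv_unique)
  show "(S - S ** C ** matrix_inv B ** transpose C ** S) ** C ** matrix_inv P
           = S ** C ** matrix_inv B"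
    by (simp add: matrix_mul_assoc[symmetric] msub_l msub_r h2)
qed

lemma pinv_inv: assumes "invertible (A::real^'n^'n)" shows "pinv A = matrix_inv A"
proof -
  have p: "is_pinv A (matrix_inv A)"
    unfolding is_pinv_def using minv[OF assms] by simp
  have u: "X = matrix_inv A" if "is_pinv A X" for X
  proof -
    have "A ** X ** A = A" using that is_pinv_def by blast
    then have "matrix_inv A ** (A ** X ** A) ** matrix_inv A = matrix_inv A ** A ** matrix_inv A"
      by simp
    thus ?thesis by (simp add: matrix_mul_assoc[symmetric] minv_cancel[OF assms] minv[OF assms])
  qed
  show ?thesis unfolding pinv_def using p u by blast
qed

lemma main_rec:
  fixes F C :: "nat \<Rightarrow> real^'n^'m" and H :: "nat \<Rightarrow> real^'n^'p"
    and S :: "nat \<Rightarrow> real^'m^'m" and R :: "nat \<Rightarrow> real^'p^'p"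
    and y :: "nat \<Rightarrow> real^'p"
  assumes S_pd: "\<And>k. sym_posdef (S k)"
    and R_pd: "\<And>k. sym_posdef (R k)"
    and rank_full: "\<And>k. rank (stack (F k) (H k)) = CARD('n)"
  shows "sym_posdef (fst (Pr F C H S R y k)) \<and> fst (Kf F C H S R y k) = matrix_inv (fst (Pr F C H S R y k))
     \<and> snd (Kf F C H S R y k) = matrix_inv (fst (Pr F C H S R y k)) *v snd (Pr F C H S R y k)"
proof (induction k)
  case 0
  show ?case using pd_FH[OF S_pd R_pd rank_full, of 0 0 0]
    by (simp add: Let_def matrix_vector_mul_assoc matrix_mul_assoc)
next
  case (Suc k)
  define P where "P = fst (Pr F C H S R y k)"
  define r where "r = snd (Pr F C H S R y k)"
  define B where "B = P + transpose (C k) ** S k ** C k"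
  define Pi where "Pi = matrix_inv P"
  define Bi where "Bi = matrix_inv B"
  define A where "A = Amat (S k) (C k) Pi"
  have pdP: "sym_posdef P" and K1: "fst (Kf F C H S R y k) = Pi" and K2: "snd (Kf F C H S R y k) = Pi *v r"
    using Suc.IH by (auto simp: P_def Pi_def r_def)
  have pdB: "sym_posdef B" unfolding B_def by (rule pd_add_congr[OF pdP S_pd])
  have iS: "invertible (S k)" and iP: "invertible P" and iB: "invertible B"
    using pd_invertible pdB pdP S_pd by auto
  have pB: "pinv B = Bi" by (simp add: Bi_def pinv_inv[OF iB])
  have AW: "A = S k - S k ** C k ** Bi ** transpose (C k) ** S k"
    unfolding A_def Amat_def Pi_def Bi_def by (rule woodbury_aux(1)[OF iS iP iB B_def])
  have ACP: "A ** C k ** Pi = S k ** C k ** Bi"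
    unfolding AW Pi_def Bi_def by (rule woodbury_aux(2)[OF iS iP iB B_def])
  have "sym_posdef (matrix_inv (S k) + transpose (transpose (C k)) ** Pi ** transpose (C k))"
    by (rule pd_add_congr[OF pd_inv[OF S_pd] pd_inv[OF pdP, folded Pi_def]])
  then have pdA: "sym_posdef A" unfolding A_def Amat_def by (simp add: pd_inv)
  have P'eq: "fst (Pr F C H S R y (Suc k)) = transpose (F (Suc k)) ** A ** F (Suc k)
       + transpose (H (Suc k)) ** R (Suc k) ** H (Suc k)"
    by (simp add: Let_def P_def[symmetric] B_def[symmetric] pB AW add.commute)
  define P' where "P' = transpose (F (Suc k)) ** A ** F (Suc k)
       + transpose (H (Suc k)) ** R (Suc k) ** H (Suc k)"
  have pdP': "sym_posdef P'" unfolding P'_def by (rule pd_FH[OF pdA R_pd rank_full])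
  have Kf1: "fst (Kf F C H S R y (Suc k)) = matrix_inv P'"
    by (simp add: Let_def K1 A_def[symmetric] P'_def)
  have r'eq: "snd (Pr F C H S R y (Suc k)) = transpose (F (Suc k)) ** S k ** C k ** Bi *v r
       + transpose (H (Suc k)) ** R (Suc k) *v y (Suc k)"
    by (simp add: Let_def P_def[symmetric] B_def[symmetric] r_def[symmetric] pB)
  have Kf2: "snd (Kf F C H S R y (Suc k)) = matrix_inv P' ** transpose (F (Suc k)) ** A ** C k *v (Pi *v r)
       + matrix_inv P' ** transpose (H (Suc k)) ** R (Suc k) *v y (Suc k)"
    by (simp add: Let_def K1 K2 A_def[symmetric] P'_def)
  have e: "matrix_inv P' ** transpose (F (Suc k)) ** A ** C k *v (Pi *v r)
      = matrix_inv P' *v (transpose (F (Suc k)) ** S k ** C k ** Bi *v r)"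
  proof -
    have "matrix_inv P' ** transpose (F (Suc k)) ** A ** C k *v (Pi *v r)
        = (matrix_inv P' ** transpose (F (Suc k)) ** (A ** C k ** Pi)) *v r"
      by (simp add: matrix_vector_mul_assoc matrix_mul_assoc)
    also have "\<dots> = (matrix_inv P' ** transpose (F (Suc k)) ** (S k ** C k ** Bi)) *v r"
      by (simp only: ACP)
    also have "\<dots> = matrix_inv P' *v (transpose (F (Suc k)) ** S k ** C k ** Bi *v r)"
      by (simp add: matrix_vector_mul_assoc matrix_mul_assoc)
    finally show ?thesis .
  qed
  have e2: "matrix_inv P' ** transpose (H (Suc k)) ** R (Suc k) *v y (Suc k)
      = matrix_inv P' *v (transpose (H (Suc k)) ** R (Suc k) *v y (Suc k))"
    by (simp add: matrix_vector_mul_assoc matrix_mul_assoc)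
  show ?case
    unfolding P'eq Kf1 r'eq Kf2 P'_def[symmetric] e e2 matrix_vector_right_distrib
    using pdP' by simp
qed

lemma coercive:
  fixes q :: "'a::euclidean_space \<Rightarrow> real"
  assumes cont: "continuous_on UNIV q" and pos: "\<And>x. x \<noteq> 0 \<Longrightarrow> q x > 0"
    and hom: "\<And>c x. q (c *\<^sub>R x) = c^2 * q x"
  shows "\<exists>lam>0. \<forall>x. lam * (norm x)^2 \<le> q x"
proof -
  have ne: "sphere (0::'a) 1 \<noteq> {}" by (simp add: sphere_eq_empty)
  obtain u where u: "u \<in> sphere 0 1" "\<forall>v\<in>sphere 0 1. q u \<le> q v"
    using continuous_attains_inf[OF compact_sphere ne continuous_on_subset[OF cont]] by blast
  have "u \<noteq> 0" using u by auto
  hence lp: "q u > 0" by (rule pos)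
  show ?thesis
  proof (intro exI[of _ "q u"] conjI allI lp)
    fix x
    show "q u * norm x ^2 \<le> q x"
    proof (cases "x = 0")
      case True
      then have "q x = 0" using hom[of 0 x] by simp
      then show ?thesis using True by simp
    next
      case False
      define v where "v = x /\<^sub>R norm x"
      have "v \<in> sphere 0 1" using False by (simp add: v_def)
      hence quv: "q u \<le> q v" using u by blast
      have "x = norm x *\<^sub>R v" using False by (simp add: v_def)
      hence "q x = norm x ^2 * q v" using hom by metis
      thus ?thesis using quv by (metis mult.commute mult_right_mono zero_le_power2)
    qed
  qed
qed

lemma sq_bound: assumes "(lam::real) > 0" "lam * n^2 \<le> K" "n \<ge> 0" shows "n \<le> max 1 (K / lam)"
proof (cases "n \<le> 1")
  case False
  then have "n \<le> n^2" by (simp add: power2_eq_square)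
  moreover have "n^2 \<le> K / lam" using assms by (simp add: field_simps mult.commute)
  ultimately show ?thesis by simp
qed simp

lemma pd_ball: assumes "sym_posdef (S::real^'m^'m)" shows "\<exists>M. \<forall>v. (S *v v) \<bullet> v \<le> 1 \<longrightarrow> norm v \<le> M"
proof -
  have "\<exists>lam>0. \<forall>x. lam * (norm x)^2 \<le> x \<bullet> (S *v x)"
  proof (rule coercive)
    show "continuous_on UNIV (\<lambda>x. x \<bullet> (S *v x))"
      by (intro continuous_intros linear_continuous_on matrix_vector_mul_bounded_linear)
    show "x \<noteq> 0 \<Longrightarrow> 0 < x \<bullet> (S *v x)" for x using pd_pos[OF assms] by blast
    show "c *\<^sub>R x \<bullet> (S *v (c *\<^sub>R x)) = c^2 * (x \<bullet> (S *v x))" for c x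
      by (simp add: matrix_vector_mult_scaleR power2_eq_square)
  qed
  then obtain lam where lam: "lam > 0" "\<forall>x. lam * (norm x)^2 \<le> x \<bullet> (S *v x)" by blast
  show ?thesis
  proof (intro exI allI impI)
    fix v assume "(S *v v) \<bullet> v \<le> 1"
    then have "lam * (norm v)^2 \<le> 1" using lam(2)[rule_format, of v] by (simp add: inner_commute)
    then show "norm v \<le> max 1 (1 / lam)" using sq_bound[OF lam(1)] by simp
  qed
qed

lemma stack_ball: fixes F :: "real^'n^'m" and H :: "real^'n^'p"
  assumes "rank (stack F H) = CARD('n)"
  shows "\<exists>M. \<forall>x. norm (F *v x) \<le> a \<longrightarrow> norm (H *v x) \<le> b \<longrightarrow> norm x \<le> M"
proof -
  have "\<exists>lam>0. \<forall>x. lam * (norm x)^2 \<le> norm (F *v x)^2 + norm (H *v x)^2"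
  proof (rule coercive)
    show "continuous_on UNIV (\<lambda>x. norm (F *v x)^2 + norm (H *v x)^2)"
      by (intro continuous_intros linear_continuous_on matrix_vector_mul_bounded_linear)
    show "x \<noteq> 0 \<Longrightarrow> 0 < norm (F *v x)^2 + norm (H *v x)^2" for x
    proof -
      assume "x \<noteq> 0" then have "F *v x \<noteq> 0 \<or> H *v x \<noteq> 0" using stack_inj[OF assms] by blast
      then show ?thesis
      proof
        assume "F *v x \<noteq> 0" then have "0 < norm (F *v x)^2" by simp
        then show ?thesis by (simp add: add_pos_nonneg)
      next
        assume "H *v x \<noteq> 0" then have "0 < norm (H *v x)^2" by simp
        then show ?thesis by (simp add: add_nonneg_pos)
      qed
    qed
    show "norm (F *v (c *\<^sub>R x))^2 + norm (H *v (c *\<^sub>R x))^2 = c^2 * (norm (F *v x)^2 + norm (H *v x)^2)" for c x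
      by (simp add: matrix_vector_mult_scaleR power_mult_distrib algebra_simps)
  qed
  then obtain lam where lam: "lam > 0" "\<forall>x. lam * (norm x)^2 \<le> norm (F *v x)^2 + norm (H *v x)^2" by blast
  show ?thesis
  proof (intro exI allI impI)
    fix x assume a: "norm (F *v x) \<le> a" and b: "norm (H *v x) \<le> b"
    have "norm (F *v x)^2 \<le> a^2" using a by (simp add: power_mono)
    moreover have "norm (H *v x)^2 \<le> b^2" using b by (simp add: power_mono)
    ultimately have "lam * (norm x)^2 \<le> a^2 + b^2" using lam(2)[rule_format, of x] by linarith
    then show "norm x \<le> max 1 ((a^2 + b^2) / lam)" using sq_bound[OF lam(1)] by simp
  qed
qed

lemma unc_expand: "unc F C H S R y xs k =
   (S 0 *v (F 0 *v xs 0)) \<bullet> (F 0 *v xs 0)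
   + (\<Sum>i=1..k. (S (i - 1) *v (F i *v xs i - C (i - 1) *v xs (i - 1))) \<bullet> (F i *v xs i - C (i - 1) *v xs (i - 1)))
   + (\<Sum>i=0..k. (R i *v (y i - H i *v xs i)) \<bullet> (y i - H i *v xs i))"
  by (simp add: unc_def Let_def)

lemma unc_terms:
  assumes S_pd: "\<And>k. sym_posdef (S k)" and R_pd: "\<And>k. sym_posdef (R k)"
    and u: "unc F C H S R y xs k \<le> 1"
  shows "(S 0 *v (F 0 *v xs 0)) \<bullet> (F 0 *v xs 0) \<le> 1"
    and "1 \<le> i \<Longrightarrow> i \<le> k \<Longrightarrow> (S (i - 1) *v (F i *v xs i - C (i - 1) *v xs (i - 1))) \<bullet> (F i *v xs i - C (i - 1) *v xs (i - 1)) \<le> 1"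
    and "j \<le> k \<Longrightarrow> (R j *v (y j - H j *v xs j)) \<bullet> (y j - H j *v xs j) \<le> 1"
proof -
  have ps: "0 \<le> (S i *v v) \<bullet> v" for i v using pd_psd[OF S_pd] by (simp add: inner_commute)
  have pr: "0 \<le> (R i *v v) \<bullet> v" for i v using pd_psd[OF R_pd] by (simp add: inner_commute)
  define f where "f = (\<lambda>i. (S (i - 1) *v (F i *v xs i - C (i - 1) *v xs (i - 1))) \<bullet> (F i *v xs i - C (i - 1) *v xs (i - 1)))"
  define g where "g = (\<lambda>i. (R i *v (y i - H i *v xs i)) \<bullet> (y i - H i *v xs i))"
  have U: "(S 0 *v (F 0 *v xs 0)) \<bullet> (F 0 *v xs 0) + sum f {1..k} + sum g {0..k} \<le> 1"
    using u unfolding unc_expand f_def g_def .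
  have f0: "\<forall>i\<in>A. 0 \<le> f i" for A using ps by (simp add: f_def)
  have g0: "\<forall>i\<in>A. 0 \<le> g i" for A using pr by (simp add: g_def)
  have sf: "0 \<le> sum f {1..k}" by (rule sum_nonneg) (use f0 in blast)
  have sg: "0 \<le> sum g {0..k}" by (rule sum_nonneg) (use g0 in blast)
  have s0: "0 \<le> (S 0 *v (F 0 *v xs 0)) \<bullet> (F 0 *v xs 0)" by (rule ps)
  show "(S 0 *v (F 0 *v xs 0)) \<bullet> (F 0 *v xs 0) \<le> 1" using U sf sg by linarith
  show "1 \<le> i \<Longrightarrow> i \<le> k \<Longrightarrow> (S (i - 1) *v (F i *v xs i - C (i - 1) *v xs (i - 1))) \<bullet> (F i *v xs i - C (i - 1) *v xs (i - 1)) \<le> 1"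
  proof -
    assume "1 \<le> i" "i \<le> k"
    then have "f i \<le> sum f {1..k}" using f0 by (intro member_le_sum) auto
    then show ?thesis using U sg s0 unfolding f_def by linarith
  qed
  show "j \<le> k \<Longrightarrow> (R j *v (y j - H j *v xs j)) \<bullet> (y j - H j *v xs j) \<le> 1"
  proof -
    assume "j \<le> k"
    then have "g j \<le> sum g {0..k}" using g0 by (intro member_le_sum) auto
    then show ?thesis using U sf s0 unfolding g_def by linarith
  qed
qed


lemma tri: "norm (a::'a::real_normed_vector) \<le> norm (a - b) + norm b"
  using norm_triangle_ineq[of "a - b" b] by simp

lemma traj_bound:
  fixes F C :: "nat \<Rightarrow> real^'n^'m" and H :: "nat \<Rightarrow> real^'n^'p"
    and S :: "nat \<Rightarrow> real^'m^'m" and R :: "nat \<Rightarrow> real^'p^'p"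
    and y :: "nat \<Rightarrow> real^'p"
  assumes S_pd: "\<And>k. sym_posdef (S k)"
    and R_pd: "\<And>k. sym_posdef (R k)"
    and rank_full: "\<And>k. rank (stack (F k) (H k)) = CARD('n)"
  shows "\<exists>M. \<forall>k xs. i \<le> k \<longrightarrow> unc F C H S R y xs k \<le> 1 \<longrightarrow> norm (xs i) \<le> M"
proof (induction i)
  case 0
  obtain MS where MS: "\<forall>v. (S 0 *v v) \<bullet> v \<le> 1 \<longrightarrow> norm v \<le> MS" using pd_ball[OF S_pd] by blast
  obtain MR where MR: "\<forall>v. (R 0 *v v) \<bullet> v \<le> 1 \<longrightarrow> norm v \<le> MR" using pd_ball[OF R_pd] by blast
  obtain MB where MB: "\<forall>x. norm (F 0 *v x) \<le> MS \<longrightarrow> norm (H 0 *v x) \<le> norm (y 0) + MR \<longrightarrow> norm x \<le> MB"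
    using stack_ball[OF rank_full] by blast
  show ?case
  proof (intro exI allI impI)
    fix k and xs :: "nat \<Rightarrow> real^'n" assume "0 \<le> k" and u: "unc F C H S R y xs k \<le> 1"
    have a: "norm (F 0 *v xs 0) \<le> MS" using unc_terms(1)[OF S_pd R_pd u] MS by blast
    have "norm (y 0 - H 0 *v xs 0) \<le> MR" using unc_terms(3)[OF S_pd R_pd u, of 0] MR by blast
    moreover have "norm (H 0 *v xs 0) \<le> norm (H 0 *v xs 0 - y 0) + norm (y 0)" by (rule tri)
    ultimately have b: "norm (H 0 *v xs 0) \<le> norm (y 0) + MR" by (simp add: norm_minus_commute)
    show "norm (xs 0) \<le> MB" using MB a b by blast
  qed
next
  case (Suc i)
  then obtain M where M: "\<forall>k xs. i \<le> k \<longrightarrow> unc F C H S R y xs k \<le> 1 \<longrightarrow> norm (xs i) \<le> M" by blast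
  obtain MS where MS: "\<forall>v. (S i *v v) \<bullet> v \<le> 1 \<longrightarrow> norm v \<le> MS" using pd_ball[OF S_pd] by blast
  obtain MR where MR: "\<forall>v. (R (Suc i) *v v) \<bullet> v \<le> 1 \<longrightarrow> norm v \<le> MR" using pd_ball[OF R_pd] by blast
  obtain K where K: "K > 0" "\<forall>x. norm (C i *v x) \<le> norm x * K"
    using bounded_linear.pos_bounded[OF matrix_vector_mul_bounded_linear] by blast
  obtain MB where MB: "\<forall>x. norm (F (Suc i) *v x) \<le> MS + M * K \<longrightarrow> norm (H (Suc i) *v x) \<le> norm (y (Suc i)) + MR \<longrightarrow> norm x \<le> MB"
    using stack_ball[OF rank_full] by blast
  show ?case
  proof (intro exI allI impI)
    fix k and xs :: "nat \<Rightarrow> real^'n" assume ik: "Suc i \<le> k" and u: "unc F C H S R y xs k \<le> 1"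
    have "i \<le> k" using ik by simp
    then have xi: "norm (xs i) \<le> M" using M u by blast
    have "(S (Suc i - 1) *v (F (Suc i) *v xs (Suc i) - C (Suc i - 1) *v xs (Suc i - 1))) \<bullet>
          (F (Suc i) *v xs (Suc i) - C (Suc i - 1) *v xs (Suc i - 1)) \<le> 1"
      using unc_terms(2)[OF S_pd R_pd u, of "Suc i"] ik by simp
    then have f: "norm (F (Suc i) *v xs (Suc i) - C i *v xs i) \<le> MS" using MS by simp
    have "norm (C i *v xs i) \<le> norm (xs i) * K" using K(2) by blast
    also have "\<dots> \<le> M * K" using xi K(1) by (simp add: mult_right_mono)
    finally have c: "norm (C i *v xs i) \<le> M * K" .
    have "norm (F (Suc i) *v xs (Suc i)) \<le> norm (F (Suc i) *v xs (Suc i) - C i *v xs i) + norm (C i *v xs i)"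
      by (rule tri)
    then have a: "norm (F (Suc i) *v xs (Suc i)) \<le> MS + M * K" using f c by linarith
    have "norm (y (Suc i) - H (Suc i) *v xs (Suc i)) \<le> MR" using unc_terms(3)[OF S_pd R_pd u ik] MR by blast
    moreover have "norm (H (Suc i) *v xs (Suc i)) \<le> norm (H (Suc i) *v xs (Suc i) - y (Suc i)) + norm (y (Suc i))" by (rule tri)
    ultimately have b: "norm (H (Suc i) *v xs (Suc i)) \<le> norm (y (Suc i)) + MR" by (simp add: norm_minus_commute)
    show "norm (xs (Suc i)) \<le> MB" using MB a b by blast
  qed
qed

theorem corollary1:
  fixes F C :: "nat \<Rightarrow> real^'n^'m" and H :: "nat \<Rightarrow> real^'n^'p"
    and S :: "nat \<Rightarrow> real^'m^'m" and R :: "nat \<Rightarrow> real^'p^'p"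
    and y :: "nat \<Rightarrow> real^'p"
  assumes S_pd: "\<And>k. sym_posdef (S k)"
    and R_pd: "\<And>k. sym_posdef (R k)"
    and data: "\<exists>xs. \<forall>\<tau>. unc F C H S R y xs \<tau> \<le> 1"
    and rank_full: "\<And>k. rank (stack (F k) (H k)) = CARD('n)"
  shows "\<forall>k. noncaus_index F C H S R y k = 0 \<and>
             pinv (fst (Pr F C H S R y k)) *v snd (Pr F C H S R y k) = snd (Kf F C H S R y k)"
proof
  fix k
  obtain xs0 where xs0: "\<forall>\<tau>. unc F C H S R y xs0 \<tau> \<le> 1" using data by blast
  have rec: "sym_posdef (fst (Pr F C H S R y k)) \<and> fst (Kf F C H S R y k) = matrix_inv (fst (Pr F C H S R y k))
     \<and> snd (Kf F C H S R y k) = matrix_inv (fst (Pr F C H S R y k)) *v snd (Pr F C H S R y k)"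
    by (rule main_rec[where F=F and C=C and H=H and S=S and R=R and y=y, OF S_pd R_pd rank_full])
  have P2: "pinv (fst (Pr F C H S R y k)) *v snd (Pr F C H S R y k) = snd (Kf F C H S R y k)"
  proof -
    have "invertible (fst (Pr F C H S R y k))" using rec pd_invertible by blast
    then show ?thesis using rec by (simp add: pinv_inv)
  qed
  obtain M where M: "\<forall>k' xs. k \<le> k' \<longrightarrow> unc F C H S R y xs k' \<le> 1 \<longrightarrow> norm (xs k) \<le> M"
    using traj_bound[where F=F and C=C and H=H and S=S and R=R and y=y and i=k, OF S_pd R_pd rank_full] by blast
  have Xb: "\<forall>x\<in>Xset F C H S R y k. norm x \<le> M" unfolding Xset_def using M by auto
  define z where "z = xs0 k"
  have zX: "z \<in> Xset F C H S R y k" unfolding Xset_def z_def using xs0 by blast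
  have rho: "rho_hat F C H S R y l k < \<infinity>" for l :: "real^'n"
  proof -
    have "(SUP x\<in>Xset F C H S R y k. ereal \<bar>l \<bullet> (x - z)\<bar>) \<le> ereal (norm l * (M + norm z))"
    proof (rule SUP_least)
      fix x assume x: "x \<in> Xset F C H S R y k"
      have "\<bar>l \<bullet> (x - z)\<bar> \<le> norm l * norm (x - z)" by (rule Cauchy_Schwarz_ineq2)
      also have "\<dots> \<le> norm l * (M + norm z)"
        using Xb x norm_triangle_ineq4[of x z] by (intro mult_left_mono) auto
      finally show "ereal \<bar>l \<bullet> (x - z)\<bar> \<le> ereal (norm l * (M + norm z))" by simp
    qed
    then have "rho_hat F C H S R y l k \<le> ereal (norm l * (M + norm z))"
      unfolding rho_hat_def by (rule INF_lower2[OF zX])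
    moreover have "ereal (norm l * (M + norm z)) < \<infinity>" by simp
    ultimately show "rho_hat F C H S R y l k < \<infinity>" by (rule le_less_trans)
  qed
  have L: "Lsub F C H S R y k = UNIV" using rho by (auto simp: Lsub_def)
  have "noncaus_index F C H S R y k = 0" unfolding noncaus_index_def L by simp
  with P2 show "noncaus_index F C H S R y k = 0 \<and>
             pinv (fst (Pr F C H S R y k)) *v snd (Pr F C H S R y k) = snd (Kf F C H S R y k)" by blast
qed

end
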